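(* Let $(\alpha,\xi)$ be an outer action of a dg Lie algebra $\mathfrak g$ on a dg Lie algebra $L$, and let $C$ be a counital cocommutative dg coalgebra with counit $\varepsilon$. Define $\tilde\alpha\colon\mathfrak g\otimes\mathrm{Hom}(C,L)\to\mathrm{Hom}(C,L)$ by $(x.f)(c)=x.f(c)$, and $\tilde\xi\colon\mathfrak g\to\mathrm{Hom}(C,L)$ by $\tilde\xi(x)(c)=\varepsilon(c)\,\xi(x)$. Then $(\tilde\alpha,\tilde\xi)$ is an outer action of $\mathfrak g$ on the convolution dg Lie algebra $\mathrm{Hom}(C,L)$.
   Context: The convolution dg Lie algebra $\mathrm{Hom}(C,L)$ has differential $\partial f=d_L\circ f-(-1)^{|f|}f\circ d_C$ and bracket $[f,g]=\ell\circ(f\otimes g)\circ\Delta$, where $\ell$ is the bracket of $L$ and $\Delta$ the coproduct of $C$. An outer action of $\mathfrak g$ on a dg Lie algebra $L$ is a pair $(\alpha,\xi)$, $\alpha\colon\mathfrak g\otimes L\to L$ of degree $0$ written $x.a$, $\xi\colon\mathfrak g\to L$ of degree $-1$, satisfying: (I) $[x,y].a=x.(y.a)-(-1)^{|x||y|}y.(x.a)$; (II) $x.[a,b]=[x.a,b]+(-1)^{|x||a|}[a,x.b]$; (III) $d\xi=-\xi d$; (IV) $\xi[x,y]=-(-1)^{|y||\xi(x)|}y.\xi(x)+(-1)^{|x|}x.\xi(y)$; (V) $d(x.a)=d(x).a+(-1)^{|x|}x.d(a)+[\xi(x),a]$. *)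

theory Defs
  imports Complex_Main "HOL-Library.Function_Algebras"
begin

text \<open>Degrees are homological: differentials have degree -1.\<close>

definition ksign :: "int \<Rightarrow> 'k::field" where
  "ksign n = (if even n then 1 else - 1)"

definition graded_vs :: "('k::field \<Rightarrow> 'v::ab_group_add \<Rightarrow> 'v) \<Rightarrow> (int \<Rightarrow> 'v set) \<Rightarrow> bool" where
  "graded_vs sc G \<longleftrightarrow>
     vector_space sc \<and>
     (\<forall>n. module.subspace sc (G n)) \<and>
     (\<forall>v. \<exists>S f. finite S \<and> (\<forall>n\<in>S. f n \<in> G n) \<and> v = sum f S) \<and>
     (\<forall>S f. finite S \<and> (\<forall>n\<in>S. f n \<in> G n) \<and> sum f S = 0 \<longrightarrow> (\<forall>n\<in>S. f n = 0))"

definition dgla :: "('k::field \<Rightarrow> 'v::ab_group_add \<Rightarrow> 'v) \<Rightarrow> (int \<Rightarrow> 'v set)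
    \<Rightarrow> ('v \<Rightarrow> 'v) \<Rightarrow> ('v \<Rightarrow> 'v \<Rightarrow> 'v) \<Rightarrow> bool" where
  "dgla sc G d br \<longleftrightarrow>
     graded_vs sc G \<and>
     Vector_Spaces.linear sc sc d \<and>
     (\<forall>n. \<forall>a\<in>G n. d a \<in> G (n - 1)) \<and>
     (\<forall>a. d (d a) = 0) \<and>
     (\<forall>a. Vector_Spaces.linear sc sc (br a)) \<and>
     (\<forall>b. Vector_Spaces.linear sc sc (\<lambda>a. br a b)) \<and>
     (\<forall>m n. \<forall>a\<in>G m. \<forall>b\<in>G n. br a b \<in> G (m + n)) \<and>
     (\<forall>m n. \<forall>a\<in>G m. \<forall>b\<in>G n. br a b = - sc (ksign (m * n)) (br b a)) \<and>
     (\<forall>m n p. \<forall>a\<in>G m. \<forall>b\<in>G n. \<forall>c\<in>G p.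
        br a (br b c) = br (br a b) c + sc (ksign (m * n)) (br b (br a c))) \<and>
     (\<forall>m n. \<forall>a\<in>G m. \<forall>b\<in>G n. d (br a b) = br (d a) b + sc (ksign m) (br a (d b)))"

text \<open>Elements of C \<otimes> C are represented by finite lists of degree-tagged pure
tensors (p, a, q, b) standing for a \<otimes> b with a of degree p and b of degree q.
Two such lists denote the same tensor iff every scalar-valued bilinear form
takes the same value on them (this characterises equality in C \<otimes> C over a
field). Similarly for C \<otimes> C \<otimes> C with trilinear forms.\<close>

definition bilin_form :: "('k::field \<Rightarrow> 'c::ab_group_add \<Rightarrow> 'c) \<Rightarrow> ('c \<Rightarrow> 'c \<Rightarrow> 'k) \<Rightarrow> bool" where
  "bilin_form sc \<beta> \<longleftrightarrow> (\<forall>a. Vector_Spaces.linear sc (*) (\<beta> a)) \<and>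
                        (\<forall>b. Vector_Spaces.linear sc (*) (\<lambda>a. \<beta> a b))"

definition trilin_form :: "('k::field \<Rightarrow> 'c::ab_group_add \<Rightarrow> 'c) \<Rightarrow> ('c \<Rightarrow> 'c \<Rightarrow> 'c \<Rightarrow> 'k) \<Rightarrow> bool" where
  "trilin_form sc \<tau> \<longleftrightarrow> (\<forall>a b. Vector_Spaces.linear sc (*) (\<tau> a b)) \<and>
                        (\<forall>a c. Vector_Spaces.linear sc (*) (\<lambda>b. \<tau> a b c)) \<and>
                        (\<forall>b c. Vector_Spaces.linear sc (*) (\<lambda>a. \<tau> a b c))"

definition tev :: "(int \<Rightarrow> 'c \<Rightarrow> int \<Rightarrow> 'c \<Rightarrow> 'w::comm_monoid_add) \<Rightarrow> (int \<times> 'c \<times> int \<times> 'c) list \<Rightarrow> 'w" where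
  "tev \<phi> xs = sum_list (map (\<lambda>(p, a, q, b). \<phi> p a q b) xs)"

definition cc_dg_coalgebra :: "('k::field \<Rightarrow> 'c::ab_group_add \<Rightarrow> 'c) \<Rightarrow> (int \<Rightarrow> 'c set)
    \<Rightarrow> ('c \<Rightarrow> 'c) \<Rightarrow> ('c \<Rightarrow> (int \<times> 'c \<times> int \<times> 'c) list) \<Rightarrow> ('c \<Rightarrow> 'k) \<Rightarrow> bool" where
  "cc_dg_coalgebra sc G d \<Delta> \<epsilon> \<longleftrightarrow>
     graded_vs sc G \<and>
     \<comment> \<open>differential\<close>
     Vector_Spaces.linear sc sc d \<and>
     (\<forall>n. \<forall>c\<in>G n. d c \<in> G (n - 1)) \<and>
     (\<forall>c. d (d c) = 0) \<and>
     \<comment> \<open>tags of the coproduct are correct, and the coproduct has degree 0\<close>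
     (\<forall>c p a q b. (p, a, q, b) \<in> set (\<Delta> c) \<longrightarrow> a \<in> G p \<and> b \<in> G q) \<and>
     (\<forall>n. \<forall>c\<in>G n. \<forall>p a q b. (p, a, q, b) \<in> set (\<Delta> c) \<longrightarrow> p + q = n) \<and>
     \<comment> \<open>the coproduct is linear\<close>
     (\<forall>\<beta>. bilin_form sc \<beta> \<longrightarrow>
        (\<forall>c c'. tev (\<lambda>p a q b. \<beta> a b) (\<Delta> (c + c')) =
                tev (\<lambda>p a q b. \<beta> a b) (\<Delta> c) + tev (\<lambda>p a q b. \<beta> a b) (\<Delta> c')) \<and>
        (\<forall>k c. tev (\<lambda>p a q b. \<beta> a b) (\<Delta> (sc k c)) = k * tev (\<lambda>p a q b. \<beta> a b) (\<Delta> c))) \<and>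
     \<comment> \<open>coassociativity\<close>
     (\<forall>\<tau>. trilin_form sc \<tau> \<longrightarrow> (\<forall>c.
        tev (\<lambda>p a q b. tev (\<lambda>p' a' q' b'. \<tau> a' b' b) (\<Delta> a)) (\<Delta> c) =
        tev (\<lambda>p a q b. tev (\<lambda>p' a' q' b'. \<tau> a a' b') (\<Delta> b)) (\<Delta> c))) \<and>
     \<comment> \<open>counit: a linear map of degree 0 to the ground field (concentrated in degree 0)\<close>
     Vector_Spaces.linear sc (*) \<epsilon> \<and>
     (\<forall>n. n \<noteq> 0 \<longrightarrow> (\<forall>c\<in>G n. \<epsilon> c = 0)) \<and>
     (\<forall>c. tev (\<lambda>p a q b. sc (\<epsilon> a) b) (\<Delta> c) = c) \<and>
     (\<forall>c. tev (\<lambda>p a q b. sc (\<epsilon> b) a) (\<Delta> c) = c) \<and>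
     \<comment> \<open>cocommutativity (Koszul sign)\<close>
     (\<forall>\<beta>. bilin_form sc \<beta> \<longrightarrow> (\<forall>c.
        tev (\<lambda>p a q b. \<beta> a b) (\<Delta> c) = tev (\<lambda>p a q b. ksign (p * q) * \<beta> b a) (\<Delta> c))) \<and>
     \<comment> \<open>d is a coderivation and the counit is a chain map\<close>
     (\<forall>\<beta>. bilin_form sc \<beta> \<longrightarrow> (\<forall>c.
        tev (\<lambda>p a q b. \<beta> a b) (\<Delta> (d c)) =
        tev (\<lambda>p a q b. \<beta> (d a) b + ksign p * \<beta> a (d b)) (\<Delta> c))) \<and>
     (\<forall>c. \<epsilon> (d c) = 0)"

text \<open>Outer action (\<alpha>, \<xi>) of the dg Lie algebra (g, dg, brg) on a graded object T whose
differential and bracket are given on homogeneous components: dT n is the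
differential on degree n, brT m n the bracket of degree m and degree n elements.\<close>
definition outer_action ::
  "('k::field \<Rightarrow> 'g::ab_group_add \<Rightarrow> 'g) \<Rightarrow> (int \<Rightarrow> 'g set) \<Rightarrow> ('g \<Rightarrow> 'g) \<Rightarrow> ('g \<Rightarrow> 'g \<Rightarrow> 'g)
   \<Rightarrow> ('k \<Rightarrow> 't::ab_group_add \<Rightarrow> 't) \<Rightarrow> (int \<Rightarrow> 't set) \<Rightarrow> (int \<Rightarrow> 't \<Rightarrow> 't) \<Rightarrow> (int \<Rightarrow> int \<Rightarrow> 't \<Rightarrow> 't \<Rightarrow> 't)
   \<Rightarrow> ('g \<Rightarrow> 't \<Rightarrow> 't) \<Rightarrow> ('g \<Rightarrow> 't) \<Rightarrow> bool" where
  "outer_action sg Gg dg brg sT GT dT brT \<alpha> \<xi> \<longleftrightarrow>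
     \<comment> \<open>\<alpha> : g \<otimes> T \<rightarrow> T is bilinear of degree 0\<close>
     (\<forall>m n. \<forall>x\<in>Gg m. \<forall>a\<in>GT n. \<alpha> x a \<in> GT (m + n)) \<and>
     (\<forall>m n. \<forall>x\<in>Gg m. \<forall>a\<in>GT n. \<forall>b\<in>GT n. \<forall>k.
        \<alpha> x (a + b) = \<alpha> x a + \<alpha> x b \<and> \<alpha> x (sT k a) = sT k (\<alpha> x a)) \<and>
     (\<forall>m n. \<forall>x\<in>Gg m. \<forall>y\<in>Gg m. \<forall>a\<in>GT n. \<forall>k.
        \<alpha> (x + y) a = \<alpha> x a + \<alpha> y a \<and> \<alpha> (sg k x) a = sT k (\<alpha> x a)) \<and>
     \<comment> \<open>\<xi> : g \<rightarrow> T is linear of degree -1\<close>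
     (\<forall>m. \<forall>x\<in>Gg m. \<xi> x \<in> GT (m - 1)) \<and>
     (\<forall>m. \<forall>x\<in>Gg m. \<forall>y\<in>Gg m. \<forall>k. \<xi> (x + y) = \<xi> x + \<xi> y \<and> \<xi> (sg k x) = sT k (\<xi> x)) \<and>
     \<comment> \<open>(I)\<close>
     (\<forall>m n p. \<forall>x\<in>Gg m. \<forall>y\<in>Gg n. \<forall>a\<in>GT p.
        \<alpha> (brg x y) a = \<alpha> x (\<alpha> y a) - sT (ksign (m * n)) (\<alpha> y (\<alpha> x a))) \<and>
     \<comment> \<open>(II)\<close>
     (\<forall>m p q. \<forall>x\<in>Gg m. \<forall>a\<in>GT p. \<forall>b\<in>GT q.
        \<alpha> x (brT p q a b) = brT (m + p) q (\<alpha> x a) b + sT (ksign (m * p)) (brT p (m + q) a (\<alpha> x b))) \<and>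
     \<comment> \<open>(III)\<close>
     (\<forall>m. \<forall>x\<in>Gg m. dT (m - 1) (\<xi> x) = - \<xi> (dg x)) \<and>
     \<comment> \<open>(IV)\<close>
     (\<forall>m n. \<forall>x\<in>Gg m. \<forall>y\<in>Gg n.
        \<xi> (brg x y) = - sT (ksign (n * (m - 1))) (\<alpha> y (\<xi> x)) + sT (ksign m) (\<alpha> x (\<xi> y))) \<and>
     \<comment> \<open>(V)\<close>
     (\<forall>m p. \<forall>x\<in>Gg m. \<forall>a\<in>GT p.
        dT (m + p) (\<alpha> x a) = \<alpha> (dg x) a + sT (ksign m) (\<alpha> x (dT p a)) + brT (m - 1) p (\<xi> x) a)"

definition hom_scale :: "('k \<Rightarrow> 'l \<Rightarrow> 'l) \<Rightarrow> 'k \<Rightarrow> ('c \<Rightarrow> 'l) \<Rightarrow> 'c \<Rightarrow> 'l" where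
  "hom_scale sL k f = (\<lambda>c. sL k (f c))"

definition hom_deg :: "('k::field \<Rightarrow> 'c::ab_group_add \<Rightarrow> 'c) \<Rightarrow> (int \<Rightarrow> 'c set)
    \<Rightarrow> ('k \<Rightarrow> 'l::ab_group_add \<Rightarrow> 'l) \<Rightarrow> (int \<Rightarrow> 'l set) \<Rightarrow> int \<Rightarrow> ('c \<Rightarrow> 'l) set" where
  "hom_deg sC GC sL GL n =
     {f. Vector_Spaces.linear sC sL f \<and> (\<forall>p. \<forall>c\<in>GC p. f c \<in> GL (p + n))}"

definition conv_d :: "('k::field \<Rightarrow> 'l::ab_group_add \<Rightarrow> 'l) \<Rightarrow> ('l \<Rightarrow> 'l) \<Rightarrow> ('c \<Rightarrow> 'c)
    \<Rightarrow> int \<Rightarrow> ('c \<Rightarrow> 'l) \<Rightarrow> 'c \<Rightarrow> 'l" where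
  "conv_d sL dL dC n f = (\<lambda>c. dL (f c) - sL (ksign n) (f (dC c)))"

text \<open>[f, g] = \<ell> \<circ> (f \<otimes> g) \<circ> \<Delta>, with (f \<otimes> g)(a \<otimes> b) = (-1)^(|g||a|) f a \<otimes> g b,
for f of degree m and g of degree n.\<close>
definition conv_br :: "('k::field \<Rightarrow> 'l::ab_group_add \<Rightarrow> 'l) \<Rightarrow> ('l \<Rightarrow> 'l \<Rightarrow> 'l)
    \<Rightarrow> ('c \<Rightarrow> (int \<times> 'c \<times> int \<times> 'c) list) \<Rightarrow> int \<Rightarrow> int \<Rightarrow> ('c \<Rightarrow> 'l) \<Rightarrow> ('c \<Rightarrow> 'l) \<Rightarrow> 'c \<Rightarrow> 'l" where
  "conv_br sL brL \<Delta> m n f g = (\<lambda>c. tev (\<lambda>p a q b. sL (ksign (n * p)) (brL (f a) (g b))) (\<Delta> c))"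

definition conv_alpha :: "('g \<Rightarrow> 'l \<Rightarrow> 'l) \<Rightarrow> 'g \<Rightarrow> ('c \<Rightarrow> 'l) \<Rightarrow> 'c \<Rightarrow> 'l" where
  "conv_alpha \<alpha> x f = (\<lambda>c. \<alpha> x (f c))"

definition conv_xi :: "('k \<Rightarrow> 'l \<Rightarrow> 'l) \<Rightarrow> ('c \<Rightarrow> 'k) \<Rightarrow> ('g \<Rightarrow> 'l) \<Rightarrow> 'g \<Rightarrow> 'c \<Rightarrow> 'l" where
  "conv_xi sL \<epsilon> \<xi> x = (\<lambda>c. sL (\<epsilon> c) (\<xi> x))"

end

theory Submission
  imports Defs
begin


lemma ksign_add: "ksign (a + b) = (ksign a * ksign b :: 'k::field)"
  by (auto simp: ksign_def)

lemma ksign_0[simp]: "ksign 0 = 1" by (simp add: ksign_def)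

lemma graded_ext:
  fixes u w :: "'a::ab_group_add \<Rightarrow> 'b::ab_group_add"
  assumes G: "graded_vs sc G"
    and u: "\<And>x y. u (x + y) = u x + u y" and w: "\<And>x y. w (x + y) = w x + w y"
    and h: "\<And>n a. a \<in> G n \<Longrightarrow> u a = w a"
  shows "u v = w v"
proof -
  interpret U: additive u by standard (rule u)
  interpret W: additive w by standard (rule w)
  from G obtain S f where "finite S" "\<forall>n\<in>S. f n \<in> G n" "v = sum f S"
    unfolding graded_vs_def by blast
  then show ?thesis using h by (simp add: U.sum W.sum) (metis (no_types, lifting) sum.cong)
qed

lemma tev_hom:
  fixes u :: "'a::ab_group_add \<Rightarrow> 'b::ab_group_add"
  assumes u: "\<And>x y. u (x + y) = u x + u y"
  shows "u (tev \<phi> xs) = tev (\<lambda>p a q b. u (\<phi> p a q b)) xs"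
proof -
  interpret U: additive u by standard (rule u)
  show ?thesis by (induct xs) (auto simp: tev_def U.zero U.add)
qed

lemma tev_add: "tev (\<lambda>p a q b. \<phi> p a q b + \<psi> p a q b) xs = tev \<phi> xs + tev \<psi> xs"
  by (induct xs) (auto simp: tev_def algebra_simps)

lemma tev_cong:
  assumes "\<And>p a q b. (p, a, q, b) \<in> set xs \<Longrightarrow> \<phi> p a q b = \<psi> p a q b"
  shows "tev \<phi> xs = tev \<psi> xs"
  using assms by (induct xs) (auto simp: tev_def)



theorem lemma3p14:
  fixes sg :: "'k::field \<Rightarrow> 'g::ab_group_add \<Rightarrow> 'g" and Gg :: "int \<Rightarrow> 'g set"
    and dg :: "'g \<Rightarrow> 'g" and brg :: "'g \<Rightarrow> 'g \<Rightarrow> 'g"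
    and sL :: "'k \<Rightarrow> 'l::ab_group_add \<Rightarrow> 'l" and GL :: "int \<Rightarrow> 'l set"
    and dL :: "'l \<Rightarrow> 'l" and brL :: "'l \<Rightarrow> 'l \<Rightarrow> 'l"
    and sC :: "'k \<Rightarrow> 'c::ab_group_add \<Rightarrow> 'c" and GC :: "int \<Rightarrow> 'c set"
    and dC :: "'c \<Rightarrow> 'c" and \<Delta> :: "'c \<Rightarrow> (int \<times> 'c \<times> int \<times> 'c) list" and \<epsilon> :: "'c \<Rightarrow> 'k"
    and \<alpha> :: "'g \<Rightarrow> 'l \<Rightarrow> 'l" and \<xi> :: "'g \<Rightarrow> 'l"
  assumes g: "dgla sg Gg dg brg"
    and L: "dgla sL GL dL brL"
    and C: "cc_dg_coalgebra sC GC dC \<Delta> \<epsilon>"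
    and act: "outer_action sg Gg dg brg sL GL (\<lambda>n. dL) (\<lambda>m n. brL) \<alpha> \<xi>"
    and \<alpha>_lin1: "\<And>x. Vector_Spaces.linear sL sL (\<alpha> x)"
    and \<alpha>_lin2: "\<And>a. Vector_Spaces.linear sg sL (\<lambda>x. \<alpha> x a)"
    and \<xi>_lin: "Vector_Spaces.linear sg sL \<xi>"
  shows "outer_action sg Gg dg brg
           (hom_scale sL) (hom_deg sC GC sL GL) (conv_d sL dL dC) (conv_br sL brL \<Delta>)
           (conv_alpha \<alpha>) (conv_xi sL \<epsilon> \<xi>)"
proof -
  have GLv: "graded_vs sL GL" and dL_lin: "Vector_Spaces.linear sL sL dL"
    and brL1: "\<And>a. Vector_Spaces.linear sL sL (brL a)"
    and brL2: "\<And>b. Vector_Spaces.linear sL sL (\<lambda>a. brL a b)"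
    using L unfolding dgla_def by auto
  have vsL: "vector_space sL" and subL: "\<And>n. module.subspace sL (GL n)"
    using GLv unfolding graded_vs_def by auto
  interpret L: vector_space sL by (rule vsL)
  have GCv: "graded_vs sC GC" and
    tags: "\<And>c p a q b. (p, a, q, b) \<in> set (\<Delta> c) \<Longrightarrow> a \<in> GC p \<and> b \<in> GC q" and
    eps_lin: "Vector_Spaces.linear sC (*) \<epsilon>" and
    eps0: "\<And>n c. n \<noteq> 0 \<Longrightarrow> c \<in> GC n \<Longrightarrow> \<epsilon> c = 0" and
    counit: "\<And>c. tev (\<lambda>p a q b. sC (\<epsilon> a) b) (\<Delta> c) = c" and
    epsd: "\<And>c. \<epsilon> (dC c) = 0"
    using C unfolding cc_dg_coalgebra_def by auto
  have vsC: "vector_space sC" using GCv unfolding graded_vs_def by auto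
  interpret C: vector_space sC by (rule vsC)
  have a_add: "\<And>x a b. \<alpha> x (a + b) = \<alpha> x a + \<alpha> x b"
    and a_sc: "\<And>x k a. \<alpha> x (sL k a) = sL k (\<alpha> x a)"
    using \<alpha>_lin1 unfolding Vector_Spaces.linear_iff by auto
  have a_add2: "\<And>x y a. \<alpha> (x + y) a = \<alpha> x a + \<alpha> y a"
    and a_sc2: "\<And>x k a. \<alpha> (sg k x) a = sL k (\<alpha> x a)"
    using \<alpha>_lin2 unfolding Vector_Spaces.linear_iff by auto
  have xi_add: "\<And>x y. \<xi> (x + y) = \<xi> x + \<xi> y"
    and xi_sc: "\<And>k x. \<xi> (sg k x) = sL k (\<xi> x)"
    using \<xi>_lin unfolding Vector_Spaces.linear_iff by auto
  have dL_add: "\<And>a b. dL (a + b) = dL a + dL b"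
    and dL_sc: "\<And>k a. dL (sL k a) = sL k (dL a)"
    using dL_lin unfolding Vector_Spaces.linear_iff by auto
  have br_add: "\<And>c a b. brL c (a + b) = brL c a + brL c b"
    and br_sc: "\<And>c k a. brL c (sL k a) = sL k (brL c a)"
    using brL1 unfolding Vector_Spaces.linear_iff by auto
  have br_add2: "\<And>c a b. brL (a + b) c = brL a c + brL b c"
    and br_sc2: "\<And>c k a. brL (sL k a) c = sL k (brL a c)"
    using brL2 unfolding Vector_Spaces.linear_iff by auto
  have eps_add: "\<And>a b. \<epsilon> (a + b) = \<epsilon> a + \<epsilon> b"
    and eps_sc: "\<And>k a. \<epsilon> (sC k a) = k * \<epsilon> a"
    using eps_lin unfolding Vector_Spaces.linear_iff by auto
  have A1: "\<forall>m n. \<forall>x\<in>Gg m. \<forall>a\<in>GL n. \<alpha> x a \<in> GL (m + n)"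
    and AI: "\<forall>m n p. \<forall>x\<in>Gg m. \<forall>y\<in>Gg n. \<forall>a\<in>GL p.
        \<alpha> (brg x y) a = \<alpha> x (\<alpha> y a) - sL (ksign (m * n)) (\<alpha> y (\<alpha> x a))"
    and AII: "\<forall>m p q. \<forall>x\<in>Gg m. \<forall>a\<in>GL p. \<forall>b\<in>GL q.
        \<alpha> x (brL a b) = brL (\<alpha> x a) b + sL (ksign (m * p)) (brL a (\<alpha> x b))"
    and AIII: "\<forall>m. \<forall>x\<in>Gg m. dL (\<xi> x) = - \<xi> (dg x)"
    and AIV: "\<forall>m n. \<forall>x\<in>Gg m. \<forall>y\<in>Gg n.
        \<xi> (brg x y) = - sL (ksign (n * (m - 1))) (\<alpha> y (\<xi> x)) + sL (ksign m) (\<alpha> x (\<xi> y))"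
    and AV: "\<forall>m p. \<forall>x\<in>Gg m. \<forall>a\<in>GL p.
        dL (\<alpha> x a) = \<alpha> (dg x) a + sL (ksign m) (\<alpha> x (dL a)) + brL (\<xi> x) a"
    and Axi: "\<forall>m. \<forall>x\<in>Gg m. \<xi> x \<in> GL (m - 1)"
    using act unfolding outer_action_def by auto
  have AIg: "\<alpha> (brg x y) a = \<alpha> x (\<alpha> y a) - sL (ksign (m * n)) (\<alpha> y (\<alpha> x a))"
    if "x \<in> Gg m" "y \<in> Gg n" for x y m n a
    by (rule graded_ext[OF GLv]) (use AI that in \<open>auto simp: a_add L.scale_right_distrib\<close>)
  have AVg: "dL (\<alpha> x a) = \<alpha> (dg x) a + sL (ksign m) (\<alpha> x (dL a)) + brL (\<xi> x) a"
    if "x \<in> Gg m" for x m a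
    by (rule graded_ext[OF GLv]) (use AV that in \<open>auto simp: a_add dL_add br_add L.scale_right_distrib\<close>)
  show ?thesis
    unfolding outer_action_def
  proof (intro conjI)
    show "\<forall>m n. \<forall>x\<in>Gg m. \<forall>a\<in>hom_deg sC GC sL GL n. conv_alpha \<alpha> x a \<in> hom_deg sC GC sL GL (m + n)"
    proof (intro allI ballI)
      fix m n x f assume x: "x \<in> Gg m" and f: "f \<in> hom_deg sC GC sL GL n"
      have "Vector_Spaces.linear sC sL (\<alpha> x \<circ> f)"
        using f \<alpha>_lin1 Vector_Spaces.linear_compose unfolding hom_deg_def by blast
      moreover have "\<alpha> x (f c) \<in> GL (p + (m + n))" if "c \<in> GC p" for c p
      proof -
        have "f c \<in> GL (p + n)" using f that unfolding hom_deg_def by blast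
        then have "\<alpha> x (f c) \<in> GL (m + (p + n))" using A1 x by blast
        then show ?thesis by (simp add: add_ac)
      qed
      ultimately show "conv_alpha \<alpha> x f \<in> hom_deg sC GC sL GL (m + n)"
        unfolding hom_deg_def conv_alpha_def by (auto simp: comp_def)
    qed
  next
    show "\<forall>m n. \<forall>x\<in>Gg m. \<forall>a\<in>hom_deg sC GC sL GL n. \<forall>b\<in>hom_deg sC GC sL GL n. \<forall>k.
        conv_alpha \<alpha> x (a + b) = conv_alpha \<alpha> x a + conv_alpha \<alpha> x b \<and>
        conv_alpha \<alpha> x (hom_scale sL k a) = hom_scale sL k (conv_alpha \<alpha> x a)"
      by (auto simp: conv_alpha_def hom_scale_def fun_eq_iff a_add a_sc)
  next
    show "\<forall>m n. \<forall>x\<in>Gg m. \<forall>y\<in>Gg m. \<forall>a\<in>hom_deg sC GC sL GL n. \<forall>k.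
        conv_alpha \<alpha> (x + y) a = conv_alpha \<alpha> x a + conv_alpha \<alpha> y a \<and>
        conv_alpha \<alpha> (sg k x) a = hom_scale sL k (conv_alpha \<alpha> x a)"
      by (auto simp: conv_alpha_def hom_scale_def fun_eq_iff a_add2 a_sc2)
  next
    show "\<forall>m. \<forall>x\<in>Gg m. conv_xi sL \<epsilon> \<xi> x \<in> hom_deg sC GC sL GL (m - 1)"
    proof (intro allI ballI)
      fix m x assume x: "x \<in> Gg m"
      have "Vector_Spaces.linear sC sL (conv_xi sL \<epsilon> \<xi> x)"
        unfolding Vector_Spaces.linear_iff conv_xi_def
        by (auto simp: vsC vsL eps_add eps_sc L.scale_left_distrib)
      moreover have "sL (\<epsilon> c) (\<xi> x) \<in> GL (p + (m - 1))" if "c \<in> GC p" for c p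
      proof (cases "p = 0")
        case True thus ?thesis using Axi x L.subspace_scale[OF subL] by auto
      next
        case False thus ?thesis using eps0[OF False that] L.subspace_0[OF subL] by auto
      qed
      ultimately show "conv_xi sL \<epsilon> \<xi> x \<in> hom_deg sC GC sL GL (m - 1)"
        unfolding hom_deg_def by (auto simp: conv_xi_def)
    qed
  next
    show "\<forall>m. \<forall>x\<in>Gg m. \<forall>y\<in>Gg m. \<forall>k. conv_xi sL \<epsilon> \<xi> (x + y) = conv_xi sL \<epsilon> \<xi> x + conv_xi sL \<epsilon> \<xi> y \<and>
        conv_xi sL \<epsilon> \<xi> (sg k x) = hom_scale sL k (conv_xi sL \<epsilon> \<xi> x)"
      by (auto simp: conv_xi_def hom_scale_def fun_eq_iff xi_add xi_sc L.scale_right_distrib L.scale_left_commute)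
  next
    show "\<forall>m n p. \<forall>x\<in>Gg m. \<forall>y\<in>Gg n. \<forall>a\<in>hom_deg sC GC sL GL p.
        conv_alpha \<alpha> (brg x y) a = conv_alpha \<alpha> x (conv_alpha \<alpha> y a) - hom_scale sL (ksign (m * n)) (conv_alpha \<alpha> y (conv_alpha \<alpha> x a))"
      by (auto simp: conv_alpha_def hom_scale_def fun_eq_iff AIg)
  next
    show "\<forall>m p q. \<forall>x\<in>Gg m. \<forall>a\<in>hom_deg sC GC sL GL p. \<forall>b\<in>hom_deg sC GC sL GL q.
        conv_alpha \<alpha> x (conv_br sL brL \<Delta> p q a b) =
        conv_br sL brL \<Delta> (m + p) q (conv_alpha \<alpha> x a) b +
        hom_scale sL (ksign (m * p)) (conv_br sL brL \<Delta> p (m + q) a (conv_alpha \<alpha> x b))"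
    proof (intro allI ballI)
      fix m P Q x f g assume x: "x \<in> Gg m" and f: "f \<in> hom_deg sC GC sL GL P"
        and g: "g \<in> hom_deg sC GC sL GL Q"
      show "conv_alpha \<alpha> x (conv_br sL brL \<Delta> P Q f g) =
        conv_br sL brL \<Delta> (m + P) Q (conv_alpha \<alpha> x f) g +
        hom_scale sL (ksign (m * P)) (conv_br sL brL \<Delta> P (m + Q) f (conv_alpha \<alpha> x g))"
      proof
        fix c
        have H: "\<alpha> x (brL (f a) (g b)) = brL (\<alpha> x (f a)) (g b) + sL (ksign (m * (p + P))) (brL (f a) (\<alpha> x (g b)))"
          if "a \<in> GC p" "b \<in> GC q" for a b p q
          using AII x f g that unfolding hom_deg_def by blast
        have e1: "\<alpha> x (tev (\<lambda>p a q b. sL (ksign (Q * p)) (brL (f a) (g b))) (\<Delta> c)) =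
           tev (\<lambda>p a q b. \<alpha> x (sL (ksign (Q * p)) (brL (f a) (g b)))) (\<Delta> c)"
          by (rule tev_hom) (rule a_add)
        have e2: "sL (ksign (m * P)) (tev (\<lambda>p a q b. sL (ksign ((m + Q) * p)) (brL (f a) (\<alpha> x (g b)))) (\<Delta> c))
          = tev (\<lambda>p a q b. sL (ksign (m * P)) (sL (ksign ((m + Q) * p)) (brL (f a) (\<alpha> x (g b))))) (\<Delta> c)"
          by (rule tev_hom) (rule L.scale_right_distrib)
        have e3: "tev (\<lambda>p a q b. \<alpha> x (sL (ksign (Q * p)) (brL (f a) (g b)))) (\<Delta> c) =
          tev (\<lambda>p a q b. sL (ksign (Q * p)) (brL (\<alpha> x (f a)) (g b)) + 
             sL (ksign (m * P)) (sL (ksign ((m + Q) * p)) (brL (f a) (\<alpha> x (g b))))) (\<Delta> c)"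
        proof (rule tev_cong)
          fix p a q b assume "(p, a, q, b) \<in> set (\<Delta> c)"
          then have ab: "a \<in> GC p" "b \<in> GC q" using tags by blast+
          have s: "ksign (Q * p) * ksign (m * (p + P)) = (ksign (m * P) * ksign ((m + Q) * p) :: 'k)"
            unfolding ksign_add[symmetric] by (simp add: algebra_simps)
          show "\<alpha> x (sL (ksign (Q * p)) (brL (f a) (g b))) = sL (ksign (Q * p)) (brL (\<alpha> x (f a)) (g b)) + 
             sL (ksign (m * P)) (sL (ksign ((m + Q) * p)) (brL (f a) (\<alpha> x (g b))))"
            by (simp add: a_sc H[OF ab] L.scale_right_distrib s)
        qed
        have "\<alpha> x (tev (\<lambda>p a q b. sL (ksign (Q * p)) (brL (f a) (g b))) (\<Delta> c)) =
          tev (\<lambda>p a q b. sL (ksign (Q * p)) (brL (\<alpha> x (f a)) (g b))) (\<Delta> c) +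
          sL (ksign (m * P)) (tev (\<lambda>p a q b. sL (ksign ((m + Q) * p)) (brL (f a) (\<alpha> x (g b)))) (\<Delta> c))"
          unfolding e1 e2 e3 by (rule tev_add)
        then show "conv_alpha \<alpha> x (conv_br sL brL \<Delta> P Q f g) c =
          (conv_br sL brL \<Delta> (m + P) Q (conv_alpha \<alpha> x f) g +
          hom_scale sL (ksign (m * P)) (conv_br sL brL \<Delta> P (m + Q) f (conv_alpha \<alpha> x g))) c"
          by (simp add: conv_alpha_def conv_br_def hom_scale_def)
      qed
    qed
  next
    show "\<forall>m. \<forall>x\<in>Gg m. conv_d sL dL dC (m - 1) (conv_xi sL \<epsilon> \<xi> x) = - conv_xi sL \<epsilon> \<xi> (dg x)"
      using AIII by (auto simp: conv_d_def conv_xi_def fun_eq_iff epsd dL_sc)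
  next
    show "\<forall>m n. \<forall>x\<in>Gg m. \<forall>y\<in>Gg n.
        conv_xi sL \<epsilon> \<xi> (brg x y) = - hom_scale sL (ksign (n * (m - 1))) (conv_alpha \<alpha> y (conv_xi sL \<epsilon> \<xi> x)) +
          hom_scale sL (ksign m) (conv_alpha \<alpha> x (conv_xi sL \<epsilon> \<xi> y))"
      using AIV by (auto simp: conv_alpha_def conv_xi_def hom_scale_def fun_eq_iff a_sc
          L.scale_right_distrib L.scale_right_diff_distrib mult.commute)
  next
    show "\<forall>m p. \<forall>x\<in>Gg m. \<forall>a\<in>hom_deg sC GC sL GL p.
        conv_d sL dL dC (m + p) (conv_alpha \<alpha> x a) =
        conv_alpha \<alpha> (dg x) a + hom_scale sL (ksign m) (conv_alpha \<alpha> x (conv_d sL dL dC p a)) +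
        conv_br sL brL \<Delta> (m - 1) p (conv_xi sL \<epsilon> \<xi> x) a"
    proof (intro allI ballI)
      fix m P x f assume x: "x \<in> Gg m" and f: "f \<in> hom_deg sC GC sL GL P"
      have f_add: "\<And>a b. f (a + b) = f a + f b" and f_sc: "\<And>k a. f (sC k a) = sL k (f a)"
        using f unfolding hom_deg_def Vector_Spaces.linear_iff by auto
      have T: "tev (\<lambda>p a q b. sL (ksign (P * p)) (brL (sL (\<epsilon> a) (\<xi> x)) (f b))) (\<Delta> c) = brL (\<xi> x) (f c)" for c
      proof -
        have "tev (\<lambda>p a q b. sL (ksign (P * p)) (brL (sL (\<epsilon> a) (\<xi> x)) (f b))) (\<Delta> c)
            = tev (\<lambda>p a q b. brL (\<xi> x) (f (sC (\<epsilon> a) b))) (\<Delta> c)"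
        proof (rule tev_cong)
          fix p a q b assume "(p, a, q, b) \<in> set (\<Delta> c)"
          then have a: "a \<in> GC p" using tags by blast
          show "sL (ksign (P * p)) (brL (sL (\<epsilon> a) (\<xi> x)) (f b)) = brL (\<xi> x) (f (sC (\<epsilon> a) b))"
          proof (cases "p = 0")
            case True thus ?thesis by (simp add: f_sc br_sc br_sc2)
          next
            case False
            have z1: "brL 0 (f b) = 0" using br_sc2[where c="f b" and k=0 and a=0] by simp
            have z2: "f 0 = 0" using f_sc[where k=0 and a=0] by simp
            have z3: "brL (\<xi> x) 0 = 0" using br_sc[where c="\<xi> x" and k=0 and a=0] by simp
            show ?thesis using eps0[OF False a] by (simp add: z1 z2 z3)
          qed
        qed
        also have "\<dots> = brL (\<xi> x) (f (tev (\<lambda>p a q b. sC (\<epsilon> a) b) (\<Delta> c)))"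
          by (rule tev_hom[symmetric]) (simp add: f_add br_add)
        finally show ?thesis by (simp add: counit)
      qed
      show "conv_d sL dL dC (m + P) (conv_alpha \<alpha> x f) =
        conv_alpha \<alpha> (dg x) f + hom_scale sL (ksign m) (conv_alpha \<alpha> x (conv_d sL dL dC P f)) +
        conv_br sL brL \<Delta> (m - 1) P (conv_xi sL \<epsilon> \<xi> x) f"
      proof
        fix c
        have ad: "\<alpha> x (u - v) = \<alpha> x u - \<alpha> x v" for u v
          using a_add[of x "u - v" v] by (simp add: algebra_simps)
        have "dL (\<alpha> x (f c)) - sL (ksign (m + P)) (\<alpha> x (f (dC c))) =
          \<alpha> (dg x) (f c) + sL (ksign m) (\<alpha> x (dL (f c) - sL (ksign P) (f (dC c)))) + brL (\<xi> x) (f c)"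
          by (simp add: AVg[OF x] ad a_sc L.scale_right_diff_distrib ksign_add mult.commute algebra_simps)
        then show "conv_d sL dL dC (m + P) (conv_alpha \<alpha> x f) c =
          (conv_alpha \<alpha> (dg x) f + hom_scale sL (ksign m) (conv_alpha \<alpha> x (conv_d sL dL dC P f)) +
          conv_br sL brL \<Delta> (m - 1) P (conv_xi sL \<epsilon> \<xi> x) f) c"
          by (simp add: conv_d_def conv_alpha_def hom_scale_def conv_br_def conv_xi_def T)
      qed
    qed
  qed
qed
end
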